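(* Let $d>0$, $\gamma>0$, $\beta>0$ and $\nu\ge 0$ be fixed with $\mathcal{R}_0=\beta/(\gamma+d)>1$. For each delay $\tau\ge 0$ let $(S^*,I^*(\tau))$ be the endemic equilibrium of the system described in the context, and let $$F(\omega,\tau)=\omega^2\left(\omega^4+a_1(\tau)\,\omega^2+a_0(\tau)\right),$$ with $a_1,a_0$ as defined in the context. Then the set of delays $\tau\ge 0$ for which $F(\omega,\tau)=0$ has a positive root $\omega>0$ is bounded, i.e. it is contained in a bounded interval $[0,\tau_{max})$ with $\tau_{max}<\infty$.
   Context: The model is the delay system for the fractions of susceptible $S$ and infected $I$ individuals (with immune fraction $R=1-S-I$): $$\dot S(t)=d(1-S(t))-\beta I(t)S(t)+I(t-\tau)\big(\gamma+\nu\beta(1-S(t-\tau)-I(t-\tau))\big)\exp\!\Big(-d\tau-\nu\beta\int_{t-\tau}^{t}I(u)\,du\Big),$$ $$\dot I(t)=\beta I(t)S(t)-(\gamma+d)I(t),$$ where $d>0$ is the per capita mortality (and birth) rate, $\beta$ the transmission rate, $\gamma$ the recovery rate, $\nu\ge0$ the boosting force and $\tau>0$ the maximal duration of immunity without boosting. When $\mathcal{R}_0=\beta/(\gamma+d)>1$ there is a unique endemic equilibrium $(S^*,I^* )$ with $S^*=1/\mathcal{R}_0$ and $I^*=I^*(\tau)>0$ the solution of $d(1-S^* )-\beta I^*S^*+(\gamma+\nu\beta(1-S^*-I^* ))I^*e^{-d\tau-\nu\beta\tau I^*}=0$. Define $\mu(\tau)=\beta I^*e^{-\tau(d+\nu\beta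 I^* )}$, $\sigma(\tau)=\gamma+\nu\beta(1-1/\mathcal{R}_0-I^* )$, and $$a_1(\tau)=d^2+\beta^2(I^* )^2-2\beta\gamma I^*-\nu^2\mu^2,$$ $$a_0(\tau)=(\beta I^*(\gamma+d))^2-2\nu\beta I^*(d+\beta I^* )\mu\sigma-(\sigma-\nu\beta I^* )^2\mu^2-2\nu^2\mu^2\beta I^*\sigma.$$ The function $F(\omega,\tau)$ equals $|P(i\omega,\tau)|^2-|Q(i\omega,\tau)|^2$ where $P(\lambda,\tau)=\lambda^3+\lambda^2(d+\beta I^* )+\lambda\beta(\gamma+d)I^*+\nu\beta I^*\mu\sigma$ and $Q(\lambda,\tau)=(\lambda^2\nu-\lambda(\sigma-\nu\beta I^* )-\nu\beta I^*\sigma)\mu$; the characteristic equation of the linearization at the endemic equilibrium is $P(\lambda,\tau)+Q(\lambda,\tau)e^{-\lambda\tau}=0$, and it has a purely imaginary root $i\omega$, $\omega>0$, only if $F(\omega,\tau)=0$. *)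

theory Defs
  imports Complex_Main
begin

definition R0 :: "real \<Rightarrow> real \<Rightarrow> real \<Rightarrow> real" where
  "R0 d \<beta> \<gamma> = \<beta> / (\<gamma> + d)"

definition endemic_eq :: "real \<Rightarrow> real \<Rightarrow> real \<Rightarrow> real \<Rightarrow> real \<Rightarrow> real \<Rightarrow> bool" where
  "endemic_eq d \<beta> \<gamma> \<nu> \<tau> I \<longleftrightarrow>
     (let S = 1 / R0 d \<beta> \<gamma> in
      d * (1 - S) - \<beta> * I * S + (\<gamma> + \<nu> * \<beta> * (1 - S - I)) * I * exp (- d * \<tau> - \<nu> * \<beta> * \<tau> * I) = 0)"

definition mu_fn :: "real \<Rightarrow> real \<Rightarrow> real \<Rightarrow> real \<Rightarrow> real \<Rightarrow> real \<Rightarrow> real" where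
  "mu_fn d \<beta> \<gamma> \<nu> \<tau> I = \<beta> * I * exp (- \<tau> * (d + \<nu> * \<beta> * I))"

definition sigma_fn :: "real \<Rightarrow> real \<Rightarrow> real \<Rightarrow> real \<Rightarrow> real \<Rightarrow> real" where
  "sigma_fn d \<beta> \<gamma> \<nu> I = \<gamma> + \<nu> * \<beta> * (1 - 1 / R0 d \<beta> \<gamma> - I)"

definition a1_fn :: "real \<Rightarrow> real \<Rightarrow> real \<Rightarrow> real \<Rightarrow> real \<Rightarrow> real \<Rightarrow> real" where
  "a1_fn d \<beta> \<gamma> \<nu> \<tau> I =
     (let \<mu> = mu_fn d \<beta> \<gamma> \<nu> \<tau> I in
      d^2 + \<beta>^2 * I^2 - 2 * \<beta> * \<gamma> * I - \<nu>^2 * \<mu>^2)"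

definition a0_fn :: "real \<Rightarrow> real \<Rightarrow> real \<Rightarrow> real \<Rightarrow> real \<Rightarrow> real \<Rightarrow> real" where
  "a0_fn d \<beta> \<gamma> \<nu> \<tau> I =
     (let \<mu> = mu_fn d \<beta> \<gamma> \<nu> \<tau> I; \<sigma> = sigma_fn d \<beta> \<gamma> \<nu> I in
      (\<beta> * I * (\<gamma> + d))^2 - 2 * \<nu> * \<beta> * I * (d + \<beta> * I) * \<mu> * \<sigma>
      - (\<sigma> - \<nu> * \<beta> * I)^2 * \<mu>^2 - 2 * \<nu>^2 * \<mu>^2 * \<beta> * I * \<sigma>)"

definition F_fn :: "real \<Rightarrow> real \<Rightarrow> real \<Rightarrow> real \<Rightarrow> real \<Rightarrow> real \<Rightarrow> real \<Rightarrow> real" where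
  "F_fn d \<beta> \<gamma> \<nu> \<tau> I \<omega> =
     \<omega>^2 * (\<omega>^4 + a1_fn d \<beta> \<gamma> \<nu> \<tau> I * \<omega>^2 + a0_fn d \<beta> \<gamma> \<nu> \<tau> I)"

end

theory Submission
  imports Defs "HOL-Real_Asymp.Real_Asymp"
begin

lemma quad_pos:
  fixes a1 a0 x :: real
  assumes "x > 0" "a0 > 0" "a1 \<ge> 0 \<or> a1^2 < 4*a0"
  shows "x^2 + a1*x + a0 > 0"
proof (cases "a1 \<ge> 0")
  case True
  then have "a1 * x \<ge> 0" using assms by simp
  moreover have "x^2 \<ge> 0" by simp
  ultimately show ?thesis using assms by linarith
next
  case False
  then have h: "a1^2 < 4*a0" using assms by auto
  have "4*(x^2 + a1*x + a0) = (2*x + a1)^2 + (4*a0 - a1^2)"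
    by (simp add: power2_eq_square algebra_simps)
  moreover have "(2*x + a1)^2 \<ge> 0" by simp
  ultimately show ?thesis using h by (smt (verit))
qed

theorem proposition1:
  fixes d \<beta> \<gamma> \<nu> :: real and Istar :: "real \<Rightarrow> real"
  assumes "d > 0" and "\<gamma> > 0" and "\<beta> > 0" and "\<nu> \<ge> 0"
    and "R0 d \<beta> \<gamma> > 1"
    and "\<And>\<tau>. \<tau> \<ge> 0 \<Longrightarrow> Istar \<tau> > 0 \<and> endemic_eq d \<beta> \<gamma> \<nu> \<tau> (Istar \<tau>)"
  shows "\<exists>\<tau>max. {\<tau>. \<tau> \<ge> 0 \<and> (\<exists>\<omega>>0. F_fn d \<beta> \<gamma> \<nu> \<tau> (Istar \<tau>) \<omega> = 0)} \<subseteq> {0..<\<tau>max}"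
proof -
  define S where "S = 1 / R0 d \<beta> \<gamma>"
  have S0: "0 < S" and S1: "S < 1" using assms(5) by (auto simp: S_def)
  define C where "C = \<gamma> + \<nu>*\<beta>*(1-S)"
  have C0: "C > 0" unfolding C_def using assms S1 by (simp add: add_pos_nonneg)
  define Iinf where "Iinf = d*(1-S)/(\<beta>*S)"
  define M where "M = 2*Iinf"
  have Iinf0: "Iinf > 0" unfolding Iinf_def using assms S0 S1 by simp
  have bS: "\<beta>*S > 0" using assms S0 by simp
  have eq: "d*(1-S) - \<beta>*Istar \<tau>*S + (C - \<nu>*\<beta>*Istar \<tau>) * Istar \<tau> * exp(-d*\<tau> - \<nu>*\<beta>*\<tau>*Istar \<tau>) = 0"
    if "\<tau> \<ge> 0" for \<tau>
  proof -
    have "endemic_eq d \<beta> \<gamma> \<nu> \<tau> (Istar \<tau>)" using assms(6) that by blast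
    then have "d * (1 - S) - \<beta> * Istar \<tau> * S + (\<gamma> + \<nu> * \<beta> * (1 - S - Istar \<tau>)) * Istar \<tau> * exp (- d * \<tau> - \<nu> * \<beta> * \<tau> * Istar \<tau>) = 0"
      unfolding endemic_eq_def Let_def S_def by simp
    moreover have "\<gamma> + \<nu> * \<beta> * (1 - S - Istar \<tau>) = C - \<nu>*\<beta>*Istar \<tau>"
      unfolding C_def by (simp add: algebra_simps)
    ultimately show ?thesis by simp
  qed
  have lim_exp: "((\<lambda>\<tau>. exp(-d*\<tau>)) \<longlongrightarrow> 0) at_top" using \<open>d>0\<close> by real_asymp
  have "eventually (\<lambda>\<tau>. exp(-d*\<tau>) < \<beta>*S/(2*C)) at_top"
    using order_tendstoD(2)[OF lim_exp] bS C0 by simp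
  then have ev1: "eventually (\<lambda>\<tau>. \<tau> \<ge> 0 \<and> C*exp(-d*\<tau>) \<le> \<beta>*S/2) at_top"
  proof (rule eventually_elim2[OF _ eventually_ge_at_top[of 0]])
    fix \<tau> :: real assume "exp(-d*\<tau>) < \<beta>*S/(2*C)" "\<tau> \<ge> 0"
    then show "\<tau> \<ge> 0 \<and> C*exp(-d*\<tau>) \<le> \<beta>*S/2" using C0 by (simp add: field_simps)
  qed
  define K where "K = (C+\<nu>*\<beta>*M)*M"
  have bound: "eventually (\<lambda>\<tau>. \<tau>\<ge>0 \<and> 0 < Istar \<tau> \<and> Istar \<tau> \<le> M \<and>
      \<bar>\<beta>*Istar \<tau>*S - d*(1-S)\<bar> \<le> K*exp(-d*\<tau>)) at_top"
    using ev1
  proof eventually_elim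
    case (elim \<tau>)
    then have t0: "\<tau> \<ge> 0" and Ce: "C*exp(-d*\<tau>) \<le> \<beta>*S/2" by auto
    define I where "I = Istar \<tau>"
    define E where "E = exp(-d*\<tau> - \<nu>*\<beta>*\<tau>*I)"
    define g where "g = C - \<nu>*\<beta>*I"
    have I0: "I > 0" using assms(6) t0 I_def by blast
    have E0: "E > 0" unfolding E_def by simp
    have nbtI: "\<nu>*\<beta>*\<tau>*I \<ge> 0" using assms t0 I0 by simp
    have EE: "E \<le> exp(-d*\<tau>)" unfolding E_def using nbtI by simp
    have e: "d*(1-S) - \<beta>*I*S + g*I*E = 0" using eq[OF t0] unfolding I_def E_def g_def by simp
    have nbI: "\<nu>*\<beta>*I \<ge> 0" using assms I0 by simp
    have IM: "I \<le> M"
    proof (cases "g \<le> 0")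
      case True
      then have "g*I*E \<le> 0" using I0 E0 by (simp add: mult_le_0_iff)
      then have "\<beta>*S*I \<le> d*(1-S)" using e by (simp add: algebra_simps)
      then have "I \<le> Iinf" unfolding Iinf_def using bS by (simp add: field_simps)
      then show ?thesis unfolding M_def using Iinf0 by simp
    next
      case False
      have "g \<le> C" unfolding g_def using nbI by simp
      then have "g*E \<le> C*exp(-d*\<tau>)" using False E0 EE C0
        by (meson less_le_not_le mult_mono)
      then have "g*E \<le> \<beta>*S/2" using Ce by simp
      then have "g*E*I \<le> \<beta>*S/2*I" using I0 by (simp add: mult_right_mono)
      then have "\<beta>*S*I/2 \<le> d*(1-S)" using e by (simp add: algebra_simps)
      then have "I \<le> 2*Iinf" unfolding Iinf_def using bS by (simp add: field_simps)
      then show ?thesis unfolding M_def by simp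
    qed
    have ga: "\<bar>g\<bar> \<le> C + \<nu>*\<beta>*M"
    proof -
      have "\<nu>*\<beta>*I \<le> \<nu>*\<beta>*M" using IM assms by (simp add: mult_left_mono)
      then show ?thesis unfolding g_def using nbI C0 by linarith
    qed
    have "\<beta>*I*S - d*(1-S) = g*I*E" using e by (simp add: algebra_simps)
    then have "\<bar>\<beta>*I*S - d*(1-S)\<bar> = \<bar>g\<bar>*I*E" using I0 E0 by (simp add: abs_mult)
    also have "\<dots> \<le> (C + \<nu>*\<beta>*M)*M*exp(-d*\<tau>)"
      using ga IM EE I0 E0 by (intro mult_mono) auto
    finally show ?case using t0 I0 IM unfolding K_def I_def by simp
  qed
  have lim_I: "(Istar \<longlongrightarrow> Iinf) at_top"
  proof (rule LIM_zero_cancel, rule tendsto_0_le[OF lim_exp, where K="K/(\<beta>*S)"])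
    show "eventually (\<lambda>\<tau>. norm (Istar \<tau> - Iinf) \<le> norm (exp(-d*\<tau>)) * (K/(\<beta>*S))) at_top"
      using bound
    proof eventually_elim
      case (elim \<tau>)
      have "\<beta>*Istar \<tau>*S - d*(1-S) = (\<beta>*S) * (Istar \<tau> - Iinf)"
      proof -
        have "\<beta>*S*Iinf = d*(1-S)" unfolding Iinf_def using S0 assms(3) by simp
        then show ?thesis by (simp add: algebra_simps)
      qed
      then have "(\<beta>*S) * \<bar>Istar \<tau> - Iinf\<bar> \<le> K*exp(-d*\<tau>)" using elim bS S0 assms(3) by (simp add: abs_mult)
      then show ?case using bS by (simp add: field_simps)
    qed
  qed
  have lim_mu: "((\<lambda>\<tau>. mu_fn d \<beta> \<gamma> \<nu> \<tau> (Istar \<tau>)) \<longlongrightarrow> 0) at_top"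
  proof (rule tendsto_0_le[OF lim_exp, where K="\<beta>*M"])
    show "eventually (\<lambda>\<tau>. norm (mu_fn d \<beta> \<gamma> \<nu> \<tau> (Istar \<tau>)) \<le> norm (exp(-d*\<tau>)) * (\<beta>*M)) at_top"
      using bound
    proof eventually_elim
      case (elim \<tau>)
      have "\<nu>*\<beta>*Istar \<tau> * \<tau> \<ge> 0" using elim assms by simp
      then have "exp (- \<tau> * (d + \<nu> * \<beta> * Istar \<tau>)) \<le> exp(-d*\<tau>)" by (simp add: algebra_simps)
      moreover have "\<beta> * Istar \<tau> \<le> \<beta>*M" using elim assms by simp
      ultimately have "\<beta> * Istar \<tau> * exp (- \<tau> * (d + \<nu> * \<beta> * Istar \<tau>)) \<le> \<beta>*M*exp(-d*\<tau>)"
        using elim assms by (intro mult_mono) auto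
      then show ?case using elim assms unfolding mu_fn_def by (simp add: abs_mult algebra_simps)
    qed
  qed
  define b where "b = \<beta>*Iinf"
  have b0: "b > 0" unfolding b_def using assms Iinf0 by simp
  define L1 where "L1 = d^2 + b^2 - 2*\<gamma>*b"
  define L0 where "L0 = (b*(\<gamma>+d))^2"
  have L0: "L0 > 0" unfolding L0_def using b0 assms by simp
  have lim_a1: "((\<lambda>\<tau>. a1_fn d \<beta> \<gamma> \<nu> \<tau> (Istar \<tau>)) \<longlongrightarrow> L1) at_top"
  proof -
    have "((\<lambda>\<tau>. a1_fn d \<beta> \<gamma> \<nu> \<tau> (Istar \<tau>)) \<longlongrightarrow> d^2 + \<beta>^2*Iinf^2 - 2*\<beta>*\<gamma>*Iinf - \<nu>^2*0^2) at_top"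
      unfolding a1_fn_def Let_def by (intro tendsto_intros lim_I lim_mu)
    moreover have "d^2 + \<beta>^2*Iinf^2 - 2*\<beta>*\<gamma>*Iinf - \<nu>^2*0^2 = L1" unfolding L1_def b_def by (simp add: power_mult_distrib algebra_simps)
    ultimately show ?thesis by simp
  qed
  have lim_a0: "((\<lambda>\<tau>. a0_fn d \<beta> \<gamma> \<nu> \<tau> (Istar \<tau>)) \<longlongrightarrow> L0) at_top"
  proof -
    have "((\<lambda>\<tau>. a0_fn d \<beta> \<gamma> \<nu> \<tau> (Istar \<tau>)) \<longlongrightarrow>
      (\<beta> * Iinf * (\<gamma> + d))^2 - 2 * \<nu> * \<beta> * Iinf * (d + \<beta> * Iinf) * 0 * sigma_fn d \<beta> \<gamma> \<nu> Iinf
      - (sigma_fn d \<beta> \<gamma> \<nu> Iinf - \<nu> * \<beta> * Iinf)^2 * 0^2 - 2 * \<nu>^2 * 0^2 * \<beta> * Iinf * sigma_fn d \<beta> \<gamma> \<nu> Iinf) at_top"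
      unfolding a0_fn_def Let_def sigma_fn_def by (intro tendsto_intros lim_I lim_mu)
    then show ?thesis unfolding L0_def b_def by simp
  qed
  have good: "eventually (\<lambda>\<tau>. a0_fn d \<beta> \<gamma> \<nu> \<tau> (Istar \<tau>) > 0 \<and>
      (a1_fn d \<beta> \<gamma> \<nu> \<tau> (Istar \<tau>) \<ge> 0 \<or> (a1_fn d \<beta> \<gamma> \<nu> \<tau> (Istar \<tau>))^2 < 4 * a0_fn d \<beta> \<gamma> \<nu> \<tau> (Istar \<tau>))) at_top"
  proof -
    have e0: "eventually (\<lambda>\<tau>. a0_fn d \<beta> \<gamma> \<nu> \<tau> (Istar \<tau>) > 0) at_top"
      using order_tendstoD(1)[OF lim_a0 L0] .
    have e1: "eventually (\<lambda>\<tau>. a1_fn d \<beta> \<gamma> \<nu> \<tau> (Istar \<tau>) \<ge> 0 \<or> (a1_fn d \<beta> \<gamma> \<nu> \<tau> (Istar \<tau>))^2 < 4 * a0_fn d \<beta> \<gamma> \<nu> \<tau> (Istar \<tau>)) at_top"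
    proof (cases "L1 > 0")
      case True
      from order_tendstoD(1)[OF lim_a1 True] show ?thesis by eventually_elim simp
    next
      case False
      have id: "L1^2 - 4*L0 = ((d-b)^2 - 4*\<gamma>*b) * (d+b)^2"
        unfolding L1_def L0_def by (simp add: power2_eq_square algebra_simps)
      have "2*\<gamma>*b \<ge> d^2 + b^2" using False unfolding L1_def by simp
      then have h1: "(d-b)^2 - 4*\<gamma>*b \<le> (d-b)^2 - 2*(d^2+b^2)"
        proof -
          have "4*\<gamma>*b = 2*(2*\<gamma>*b)" by simp
          with \<open>2*\<gamma>*b \<ge> d^2 + b^2\<close> show ?thesis by (smt (verit))
        qed
      have h2: "(d-b)^2 - 2*(d^2+b^2) = -((d+b)^2)" by (simp add: power2_eq_square algebra_simps)
      have "(d+b)^2 > 0" using assms b0 by simp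
      moreover have "(d-b)^2 - 4*\<gamma>*b < 0" using h1 h2 \<open>(d+b)^2 > 0\<close> by linarith
      ultimately have "L1^2 - 4*L0 < 0" unfolding id by (simp add: mult_neg_pos)
      moreover have "((\<lambda>\<tau>. (a1_fn d \<beta> \<gamma> \<nu> \<tau> (Istar \<tau>))^2 - 4 * a0_fn d \<beta> \<gamma> \<nu> \<tau> (Istar \<tau>)) \<longlongrightarrow> L1^2 - 4*L0) at_top"
        by (intro tendsto_intros lim_a1 lim_a0)
      ultimately have "eventually (\<lambda>\<tau>. (a1_fn d \<beta> \<gamma> \<nu> \<tau> (Istar \<tau>))^2 - 4 * a0_fn d \<beta> \<gamma> \<nu> \<tau> (Istar \<tau>) < 0) at_top"
        using order_tendstoD(2) by blast
      then show ?thesis by eventually_elim simp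
    qed
    from e0 e1 show ?thesis by eventually_elim simp
  qed
  then obtain N where N: "\<And>\<tau>. \<tau> \<ge> N \<Longrightarrow> a0_fn d \<beta> \<gamma> \<nu> \<tau> (Istar \<tau>) > 0 \<and>
      (a1_fn d \<beta> \<gamma> \<nu> \<tau> (Istar \<tau>) \<ge> 0 \<or> (a1_fn d \<beta> \<gamma> \<nu> \<tau> (Istar \<tau>))^2 < 4 * a0_fn d \<beta> \<gamma> \<nu> \<tau> (Istar \<tau>))"
    unfolding eventually_at_top_linorder by blast
  have noroot: "F_fn d \<beta> \<gamma> \<nu> \<tau> (Istar \<tau>) \<omega> \<noteq> 0" if "\<tau> \<ge> N" "\<omega> > 0" for \<tau> \<omega>
  proof -
    have "(\<omega>^2)^2 + a1_fn d \<beta> \<gamma> \<nu> \<tau> (Istar \<tau>) * \<omega>^2 + a0_fn d \<beta> \<gamma> \<nu> \<tau> (Istar \<tau>) > 0"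
      using N[OF that(1)] that(2) by (intro quad_pos) auto
    moreover have "(\<omega>^2)^2 = \<omega>^4" by simp
    ultimately show ?thesis unfolding F_fn_def using that(2) by simp
  qed
  show ?thesis
  proof (rule exI[of _ "max N 0 + 1"], rule subsetI)
    fix \<tau> assume "\<tau> \<in> {\<tau>. \<tau> \<ge> 0 \<and> (\<exists>\<omega>>0. F_fn d \<beta> \<gamma> \<nu> \<tau> (Istar \<tau>) \<omega> = 0)}"
    then have "\<tau> \<ge> 0" and "\<exists>\<omega>>0. F_fn d \<beta> \<gamma> \<nu> \<tau> (Istar \<tau>) \<omega> = 0" by auto
    then have "\<tau> < N" using noroot by (meson not_le)
    then show "\<tau> \<in> {0..<max N 0 + 1}" using \<open>\<tau> \<ge> 0\<close> by simp
  qed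
qed

end
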